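(* Let $p\ge2$ be an integer and $\eta>-1$. (1) If $\eta\ge -\frac{p-1}{p}$, then $\tau_\ell(s)\le\pi$ for every $s\in[-1,1]$. (2) If $-1<\eta<-\frac{p-1}{p}$, then $\tau_\ell(s)\ge\pi$ for all $s$ with $\frac{p-1}{p|\eta|}\le|s|\le 1$, and $\tau_\ell(s)<\pi$ for all $s$ with $|s|<\frac{p-1}{p|\eta|}$.
   Context: For an integer $p\ge 2$ and a real parameter $\eta>-1$, define for $\tau\ge 0$ and $s\in[-1,1]$ $$\ell_-(\tau,s)=\cos\tau\,\sin\!\Big(\tau\eta s-\tfrac{\pi}{p}\Big)+s\sin\tau\,\cos\!\Big(\tau\eta s-\tfrac{\pi}{p}\Big),\qquad \ell_+(\tau,s)=\cos\tau\,\sin\!\Big(\tau\eta s+\tfrac{\pi}{p}\Big)+s\sin\tau\,\cos\!\Big(\tau\eta s+\tfrac{\pi}{p}\Big).$$ Let $\tau_\ell^-(s)$ (resp. $\tau_\ell^+(s)$) be the smallest positive root in $\tau$ of $\ell_-(\tau,s)=0$ (resp. $\ell_+(\tau,s)=0$), and $\tau_\ell(s)=\min(\tau_\ell^-(s),\tau_\ell^+(s))$. *)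

theory Defs
  imports Complex_Main
begin

definition ell_minus :: "nat \<Rightarrow> real \<Rightarrow> real \<Rightarrow> real \<Rightarrow> real" where
  "ell_minus p \<eta> \<tau> s = cos \<tau> * sin (\<tau> * \<eta> * s - pi / real p) + s * sin \<tau> * cos (\<tau> * \<eta> * s - pi / real p)"

definition ell_plus :: "nat \<Rightarrow> real \<Rightarrow> real \<Rightarrow> real \<Rightarrow> real" where
  "ell_plus p \<eta> \<tau> s = cos \<tau> * sin (\<tau> * \<eta> * s + pi / real p) + s * sin \<tau> * cos (\<tau> * \<eta> * s + pi / real p)"

text \<open>Smallest positive root in tau (as an infimum of the set of positive roots;
  since ell(0,s) is nonzero, this infimum is attained whenever a root exists).\<close>
definition tau_minus :: "nat \<Rightarrow> real \<Rightarrow> real \<Rightarrow> real" where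
  "tau_minus p \<eta> s = Inf {\<tau>. \<tau> > 0 \<and> ell_minus p \<eta> \<tau> s = 0}"

definition tau_plus :: "nat \<Rightarrow> real \<Rightarrow> real \<Rightarrow> real" where
  "tau_plus p \<eta> s = Inf {\<tau>. \<tau> > 0 \<and> ell_plus p \<eta> \<tau> s = 0}"

definition tau_ell :: "nat \<Rightarrow> real \<Rightarrow> real \<Rightarrow> real" where
  "tau_ell p \<eta> s = min (tau_minus p \<eta> s) (tau_plus p \<eta> s)"

end

theory Submission
  imports Defs
begin


lemma cont_minus: "continuous_on S (\<lambda>t. ell_minus p \<eta> t s)"
  unfolding ell_minus_def by (intro continuous_intros)
lemma cont_plus: "continuous_on S (\<lambda>t. ell_plus p \<eta> t s)"
  unfolding ell_plus_def by (intro continuous_intros)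

lemma theta_bounds: assumes "p \<ge> 2" shows "0 < pi / real p" "pi / real p \<le> pi/2"
  using assms by (auto simp: field_simps)

lemma sin_theta_pos: assumes "p \<ge> 2" shows "sin (pi / real p) > 0"
  using theta_bounds[OF assms] pi_gt_zero by (intro sin_gt_zero) linarith+

lemma ell_minus_0: "ell_minus p \<eta> 0 s = - sin (pi / real p)"
  unfolding ell_minus_def by simp
lemma ell_plus_0: "ell_plus p \<eta> 0 s = sin (pi / real p)"
  unfolding ell_plus_def by simp

lemma ell_minus_npi: "ell_minus p \<eta> (real k * pi) s = sin (real k * pi * (1 + \<eta> * s) - pi / real p)"
proof -
  have "sin (real k * pi * (1 + \<eta> * s) - pi / real p) = sin ((real k * pi * \<eta> * s - pi / real p) + real k * pi)"
    by (simp add: algebra_simps)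
  also have "\<dots> = cos (real k * pi) * sin (real k * pi * \<eta> * s - pi / real p)"
    by (simp only: sin_add sin_npi) simp
  finally show ?thesis unfolding ell_minus_def by (simp only: sin_npi)
qed

lemma ell_plus_npi: "ell_plus p \<eta> (real k * pi) s = sin (real k * pi * (1 + \<eta> * s) + pi / real p)"
proof -
  have "sin (real k * pi * (1 + \<eta> * s) + pi / real p) = sin ((real k * pi * \<eta> * s + pi / real p) + real k * pi)"
    by (simp add: algebra_simps)
  also have "\<dots> = cos (real k * pi) * sin (real k * pi * \<eta> * s + pi / real p)"
    by (simp only: sin_add sin_npi) simp
  finally show ?thesis unfolding ell_plus_def by (simp only: sin_npi)
qed

lemma ell_minus_pi: "ell_minus p \<eta> pi s = - sin (pi * \<eta> * s - pi / real p)"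
  unfolding ell_minus_def by (simp only: cos_pi sin_pi)
lemma ell_plus_pi: "ell_plus p \<eta> pi s = - sin (pi * \<eta> * s + pi / real p)"
  unfolding ell_plus_def by (simp only: cos_pi sin_pi)

lemma root_minus:
  assumes "p \<ge> 2" "T > 0" "ell_minus p \<eta> T s \<ge> 0"
  shows "\<exists>t. 0 < t \<and> t \<le> T \<and> ell_minus p \<eta> t s = 0 \<and> (ell_minus p \<eta> T s \<noteq> 0 \<longrightarrow> t < T)"
proof -
  have "sin (pi / real p) > 0" using sin_theta_pos[OF assms(1)] .
  hence "ell_minus p \<eta> 0 s \<le> 0" by (simp add: ell_minus_0)
  then obtain t where t: "0 \<le> t" "t \<le> T" "ell_minus p \<eta> t s = 0"
    using IVT'[of "\<lambda>t. ell_minus p \<eta> t s" 0 0 T, OF _ assms(3)] assms(2) cont_minus by auto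
  have "t \<noteq> 0" using t(3) \<open>sin (pi / real p) > 0\<close> by (auto simp: ell_minus_0)
  moreover have "ell_minus p \<eta> T s \<noteq> 0 \<longrightarrow> t < T" using t by (cases "t = T") auto
  ultimately show ?thesis using t by (intro exI[of _ t]) auto
qed

lemma root_plus:
  assumes "p \<ge> 2" "T > 0" "ell_plus p \<eta> T s \<le> 0"
  shows "\<exists>t. 0 < t \<and> t \<le> T \<and> ell_plus p \<eta> t s = 0 \<and> (ell_plus p \<eta> T s \<noteq> 0 \<longrightarrow> t < T)"
proof -
  have "sin (pi / real p) > 0" using sin_theta_pos[OF assms(1)] .
  hence "ell_plus p \<eta> 0 s \<ge> 0" by (simp add: ell_plus_0)
  then obtain t where t: "0 \<le> t" "t \<le> T" "ell_plus p \<eta> t s = 0"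
    using IVT2'[of "\<lambda>t. ell_plus p \<eta> t s" T 0 0, OF assms(3)] assms(2) cont_plus by auto
  have "t \<noteq> 0" using t(3) \<open>sin (pi / real p) > 0\<close> by (auto simp: ell_plus_0)
  moreover have "ell_plus p \<eta> T s \<noteq> 0 \<longrightarrow> t < T" using t by (cases "t = T") auto
  ultimately show ?thesis using t by (intro exI[of _ t]) auto
qed

lemma tau_minus_le:
  assumes "0 < t" "ell_minus p \<eta> t s = 0" shows "tau_minus p \<eta> s \<le> t"
  unfolding tau_minus_def using assms
  by (intro cInf_lower) (auto simp: bdd_below_def intro!: exI[of _ 0])
lemma tau_plus_le:
  assumes "0 < t" "ell_plus p \<eta> t s = 0" shows "tau_plus p \<eta> s \<le> t"
  unfolding tau_plus_def using assms
  by (intro cInf_lower) (auto simp: bdd_below_def intro!: exI[of _ 0])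

lemma ell_sym: "ell_minus p \<eta> t (-s) = - ell_plus p \<eta> t s"
proof -
  have e: "t * \<eta> * - s - pi / real p = - (t * \<eta> * s + pi / real p)" by simp
  have "sin (t * \<eta> * - s - pi / real p) = - sin (t * \<eta> * s + pi / real p)"
    unfolding e by (rule sin_minus)
  moreover have "cos (t * \<eta> * - s - pi / real p) = cos (t * \<eta> * s + pi / real p)"
    unfolding e by (rule cos_minus)
  ultimately show ?thesis unfolding ell_minus_def ell_plus_def
    by (simp add: algebra_simps)
qed

lemma tau_ell_sym: "tau_ell p \<eta> (-s) = tau_ell p \<eta> s"
proof -
  have "tau_minus p \<eta> (-s) = tau_plus p \<eta> s" unfolding tau_minus_def tau_plus_def ell_sym by simp
  moreover have "tau_plus p \<eta> (-s) = tau_minus p \<eta> s"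
    unfolding tau_minus_def tau_plus_def using ell_sym[of p \<eta> _ "-s"] by simp
  ultimately show ?thesis unfolding tau_ell_def by simp
qed




definition alph :: "real \<Rightarrow> real \<Rightarrow> real" where
  "alph s t = pi/2 - arctan (cos t / (s * sin t))"

lemma alph_deriv:
  assumes "s > 0" "sin t \<noteq> 0"
  shows "(alph s has_real_derivative s / ((s * sin t)^2 + (cos t)^2)) (at t)"
proof -
  have h: "(s * sin t)^2 > 0" using assms by simp
  have e1: "- sin t * 1 * (s * sin t) - cos t * (0 * sin t + cos t * 1 * s) = - s"
  proof -
    have "- sin t * 1 * (s * sin t) - cos t * (0 * sin t + cos t * 1 * s) = - s * ((sin t)^2 + (cos t)^2)"
      by (simp add: power2_eq_square) algebra
    also have "\<dots> = - s" by simp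
    finally show ?thesis .
  qed
  have e2: "1 + (cos t / (s * sin t))^2 = ((s * sin t)^2 + (cos t)^2) / (s * sin t)^2"
  proof -
    have "(s * sin t)^2 \<noteq> 0" using h by simp
    then show ?thesis by (simp add: power_divide add_divide_distrib)
  qed
  have "0 - inverse (1 + (cos t / (s * sin t))\<^sup>2) * ((- sin t * 1 * (s * sin t) - cos t * (0 * sin t + cos t * 1 * s)) /
     (s * sin t * (s * sin t))) = s / ((s * sin t)^2 + (cos t)^2)"
    unfolding e1 e2 using h assms by (simp add: field_simps power2_eq_square)
  then show ?thesis
    unfolding alph_def[abs_def]
    apply -
    apply (rule derivative_eq_intros refl)+
    using assms apply simp
    apply (rule refl)+
    apply assumption
    done
qed

lemma alph_deriv_ge:
  fixes s t :: real
  assumes "s > 0" "s \<le> 1" "sin t \<noteq> 0"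
  shows "s / ((s * sin t)^2 + (cos t)^2) \<ge> s"
proof -
  have "s*s \<le> s" using assms by (metis mult_left_le less_imp_le)
  hence "s*s \<le> 1" using assms by linarith
  hence "s^2 \<le> 1" by (simp add: power2_eq_square)
  hence "s^2 * (sin t)^2 \<le> 1 * (sin t)^2" by (intro mult_right_mono) auto
  hence "(s * sin t)^2 \<le> (sin t)^2" by (simp add: power_mult_distrib)
  hence d: "(s * sin t)^2 + (cos t)^2 \<le> 1" by (simp add: sin_squared_eq)
  have "(s * sin t)^2 + (cos t)^2 > 0" using assms by (simp add: add_pos_nonneg)
  with d assms show ?thesis by (simp add: le_divide_eq)
qed




lemma alph_polar:
  fixes s t :: real
  assumes "0 < s" "0 < t" "t < pi"
  shows "\<exists>r>0. cos t = r * cos (alph s t) \<and> s * sin t = r * sin (alph s t)"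
proof -
  define w where "w = cos t / (s * sin t)"
  have st: "sin t > 0" using assms by (intro sin_gt_zero)
  define r where "r = s * sin t * sqrt (1 + w^2)"
  have q: "sqrt (1 + w^2) > 0" by (simp add: add_pos_nonneg)
  have r: "r > 0" unfolding r_def using assms st q by simp
  have ca: "cos (alph s t) = w / sqrt (1 + w^2)"
    unfolding alph_def w_def[symmetric] by (simp add: cos_diff sin_arctan)
  have sa: "sin (alph s t) = 1 / sqrt (1 + w^2)"
    unfolding alph_def w_def[symmetric] by (simp add: sin_diff cos_arctan)
  have "r * cos (alph s t) = s * sin t * w" unfolding ca r_def using q by simp
  also have "\<dots> = cos t" unfolding w_def using st assms by simp
  finally have "cos t = r * cos (alph s t)" ..
  moreover have "s * sin t = r * sin (alph s t)" unfolding sa r_def using q by simp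
  ultimately show ?thesis using r by blast
qed

lemma alph_tan:
  fixes s t :: real
  assumes "0 < s" "0 < t" "t < pi/2"
  shows "alph s t = arctan (s * tan t)"
proof -
  have c: "cos t > 0" using assms by (intro cos_gt_zero_pi) auto
  have si: "sin t > 0" using assms by (intro sin_gt_zero) auto
  have x: "s * tan t > 0" using c si assms by (simp add: tan_def)
  have x0: "s * tan t \<noteq> 0" using x by linarith
  have "arctan (1 / (s * tan t)) = pi/2 - arctan (s * tan t)"
    using arctan_inverse[OF x0] x by simp
  moreover have "1 / (s * tan t) = cos t / (s * sin t)" using c si by (simp add: tan_def)
  ultimately show ?thesis unfolding alph_def by simp
qed

lemma alph_pi2: "alph s (pi/2) = pi/2"
  unfolding alph_def by simp

lemma alph_sym:
  fixes s t :: real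
  shows "alph s (pi - t) = pi - alph s t"
  unfolding alph_def by (simp add: arctan_minus)

lemma alph_lower:
  fixes s t :: real
  assumes "0 < s" "s \<le> 1" "0 < t" "t < pi"
  shows "s * t \<le> alph s t"
proof -
  consider "t < pi/2" | "t = pi/2" | "t > pi/2" by linarith
  then show ?thesis
  proof cases
    case 1
    define f where "f u = arctan (s * tan u) - s * u" for u
    have "f 0 \<le> f t"
    proof (rule DERIV_nonneg_imp_nondecreasing[of 0 t f])
      show "0 \<le> t" using assms by simp
      fix u assume u: "0 \<le> u" "u \<le> t"
      have c: "cos u > 0" using u 1 by (intro cos_gt_zero_pi) auto
      have D: "(f has_real_derivative inverse (1 + (s * tan u)^2) * (s * inverse ((cos u)^2)) - s) (at u)"
        unfolding f_def[abs_def] using c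
        by (auto intro!: derivative_eq_intros)
      have "inverse (1 + (s * tan u)^2) * (s * inverse ((cos u)^2)) = s / ((s * sin u)^2 + (cos u)^2)"
        using c by (simp add: tan_def field_simps power_mult_distrib power_divide)
      moreover have "s / ((s * sin u)^2 + (cos u)^2) \<ge> s"
      proof (cases "sin u = 0")
        case True
        then have "(cos u)^2 = 1" using sin_cos_squared_add[of u] by simp
        then show ?thesis using True by simp
      next
        case False then show ?thesis using alph_deriv_ge assms by auto
      qed
      ultimately show "\<exists>y. (f has_real_derivative y) (at u) \<and> 0 \<le> y" using D by (intro exI) auto
    qed
    then show ?thesis using alph_tan[OF assms(1,3) 1] unfolding f_def by simp
  next
    case 2
    have "alph s t = pi/2" unfolding 2 by (rule alph_pi2)
    moreover have "s * t \<le> t" using assms by (simp add: mult_left_le_one_le)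
    ultimately show ?thesis using 2 by linarith
  next
    case 3
    define g where "g u = alph s u - s * u" for u
    have "g (pi/2) \<le> g t"
    proof (rule DERIV_nonneg_imp_nondecreasing[of "pi/2" t g])
      show "pi/2 \<le> t" using 3 by simp
      fix u assume u: "pi/2 \<le> u" "u \<le> t"
      have si: "sin u \<noteq> 0" using u assms 3 by (intro sin_gt_zero[THEN less_imp_neq, THEN not_sym]) auto
      have "(g has_real_derivative s / ((s * sin u)^2 + (cos u)^2) - s) (at u)"
        unfolding g_def[abs_def] using alph_deriv[OF assms(1) si]
        by (auto intro!: derivative_eq_intros)
      then show "\<exists>y. (g has_real_derivative y) (at u) \<and> 0 \<le> y"
        using alph_deriv_ge[OF assms(1,2) si] by (intro exI) auto
    qed
    moreover have "g (pi/2) \<ge> 0" unfolding g_def alph_pi2 using assms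
      by (simp add: mult_left_le)
    ultimately show ?thesis unfolding g_def by simp
  qed
qed

lemma alph_upper:
  fixes s t :: real
  assumes "0 < s" "s \<le> 1" "0 < t" "t < pi"
  shows "alph s t \<le> pi - s * (pi - t)"
  using alph_lower[OF assms(1,2), of "pi - t"] alph_sym[of s t] assms by simp




lemma nat_ceil_ex: fixes x :: real assumes "x > 0"
  shows "\<exists>k::nat. x \<le> real k \<and> real k < x + 1 \<and> k \<ge> 1"
proof (intro exI[of _ "nat \<lceil>x\<rceil>"] conjI)
  have c: "real (nat \<lceil>x\<rceil>) = of_int \<lceil>x\<rceil>" using assms by simp
  show "x \<le> real (nat \<lceil>x\<rceil>)" unfolding c by simp
  show "real (nat \<lceil>x\<rceil>) < x + 1" unfolding c by linarith
  show "nat \<lceil>x\<rceil> \<ge> 1" using assms by (simp add: Suc_le_eq)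
qed

lemma no_roots:
  fixes p :: nat and \<eta> s t :: real
  assumes p: "p \<ge> 2" and s: "0 < s" "s \<le> 1" and b1: "(real p - 1) / real p \<le> - \<eta> * s"
    and b2: "- \<eta> * s < s" and t: "0 < t" "t < pi"
  shows "ell_plus p \<eta> t s > 0 \<and> ell_minus p \<eta> t s < 0"
proof -
  define \<beta> where "\<beta> = - \<eta> * s"
  define \<theta> where "\<theta> = pi / real p"
  have th: "0 < \<theta>" "\<theta> \<le> pi/2" using theta_bounds[OF p] unfolding \<theta>_def by auto
  have P: "real p > 0" using p by simp
  have bpi: "\<beta> * pi \<ge> pi - \<theta>"
  proof -
    have "(real p - 1) / real p * pi = pi - \<theta>" unfolding \<theta>_def using P by (simp add: field_simps)
    moreover have "(real p - 1) / real p * pi \<le> \<beta> * pi" using b1 unfolding \<beta>_def by (intro mult_right_mono) auto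
    ultimately show ?thesis by linarith
  qed
  have bth: "\<beta> * pi \<ge> \<theta>" using bpi th by linarith
  obtain r where r: "r > 0" "cos t = r * cos (alph s t)" "s * sin t = r * sin (alph s t)"
    using alph_polar[OF s(1) t] by blast
  define a where "a = alph s t"
  have lo: "s * t \<le> a" unfolding a_def using alph_lower[OF s t] .
  have up: "a \<le> pi - s * (pi - t)" unfolding a_def using alph_upper[OF s t] .
  have m1: "(s - \<beta>) * t > 0" using b2 t unfolding \<beta>_def by simp
  have m2: "(s - \<beta>) * (pi - t) > 0" using b2 t unfolding \<beta>_def by simp
  have phi: "t * \<eta> * s = - \<beta> * t" unfolding \<beta>_def by simp
  have gen: "cos t * sin x + s * sin t * cos x = r * sin (a + x)" for x
    unfolding r(2) r(3) a_def sin_add by (simp add: algebra_simps)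
  have ep: "ell_plus p \<eta> t s = r * sin (a - \<beta> * t + \<theta>)"
    unfolding ell_plus_def gen phi \<theta>_def by (simp add: algebra_simps)
  have em: "ell_minus p \<eta> t s = r * sin (a - \<beta> * t - \<theta>)"
    unfolding ell_minus_def gen phi \<theta>_def by (simp add: algebra_simps)
  have "sin (a - \<beta> * t + \<theta>) > 0"
  proof (rule sin_gt_zero)
    show "0 < a - \<beta> * t + \<theta>" using lo m1 th by (simp add: algebra_simps)
    show "a - \<beta> * t + \<theta> < pi" using up m2 bth by (simp add: algebra_simps)
  qed
  moreover have "sin (- (a - \<beta> * t - \<theta>)) > 0"
  proof (rule sin_gt_zero)
    show "0 < - (a - \<beta> * t - \<theta>)" using up m2 bpi by (simp add: algebra_simps)
    show "- (a - \<beta> * t - \<theta>) < pi" using lo m1 th by (simp add: algebra_simps)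
  qed
  then have "sin (a - \<beta> * t - \<theta>) < 0" by (simp only: sin_minus)
  ultimately show ?thesis unfolding ep em using r(1) by (simp add: mult_pos_neg)
qed




lemma scale_le:
  fixes A P c k :: real
  assumes "P > 0" "c > 0" "A / (P * c) \<le> k"
  shows "pi * A / P \<le> k * pi * c"
proof -
  have "A \<le> k * (P * c)" using assms by (simp add: pos_divide_le_eq)
  hence "pi / P * A \<le> pi / P * (k * (P * c))" using assms by (intro mult_left_mono) auto
  thus ?thesis using assms by (simp add: field_simps)
qed

lemma scale_less:
  fixes A P c k :: real
  assumes "P > 0" "c > 0" "k < A / (P * c) + 1"
  shows "k * pi * c < pi * A / P + pi * c"
proof -
  have "k * (P * c) < A + P * c" using assms by (simp add: pos_less_divide_eq field_simps)
  hence "pi / P * (k * (P * c)) < pi / P * (A + P * c)" using assms by (intro mult_strict_left_mono) auto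
  thus ?thesis using assms by (simp add: field_simps)
qed

lemma part2a_pos:
  fixes p :: nat and \<eta> s :: real
  assumes p: "p \<ge> 2" and s: "0 < s" "s \<le> 1" and e: "-1 < \<eta>"
    and b1: "(real p - 1) / real p \<le> - \<eta> * s"
  shows "tau_minus p \<eta> s \<ge> pi \<and> tau_plus p \<eta> s \<ge> pi"
proof -
  have "(- \<eta>) * s < 1 * s" using e s by (intro mult_strict_right_mono) auto
  hence b2: "- \<eta> * s < s" by simp
  define P where "P = real p"
  have P: "P \<ge> 2" using p unfolding P_def by simp
  define c where "c = 1 + \<eta> * s"
  have c: "c > 0" using b2 s unfolding c_def by linarith
  have b1': "(P - 1) / P \<le> - \<eta> * s" using b1 unfolding P_def .
  have "(P - 1) / P > 0" using P by simp
  hence c1: "c < 1" using b1' unfolding c_def by linarith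
  have "pi * c < pi * 1" using c1 by (intro mult_strict_left_mono) auto
  hence pc: "pi * c < pi" by simp
  have nr: "ell_plus p \<eta> t s > 0 \<and> ell_minus p \<eta> t s < 0" if "0 < t" "t < pi" for t
    using no_roots[OF p s b1 b2 that] .
  obtain k where k: "1 / (P * c) \<le> real k" "real k < 1 / (P * c) + 1" "k \<ge> 1"
    using nat_ceil_ex[of "1 / (P * c)"] c P by auto
  have k1: "pi * 1 / P \<le> real k * pi * c" using scale_le[OF _ c k(1)] P by simp
  have k2: "real k * pi * c < pi * 1 / P + pi * c" using scale_less[OF _ c k(2)] P by simp
  have "sin (real k * pi * (1 + \<eta> * s) - pi / real p) \<ge> 0"
    unfolding c_def[symmetric] P_def[symmetric]
  proof (rule sin_ge_zero)
    show "0 \<le> real k * pi * c - pi / P" using k1 by simp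
    show "real k * pi * c - pi / P \<le> pi" using k2 pc by linarith
  qed
  hence "ell_minus p \<eta> (real k * pi) s \<ge> 0" by (simp add: ell_minus_npi)
  then obtain t0 where t0: "0 < t0" "ell_minus p \<eta> t0 s = 0"
    using root_minus[OF p, of "real k * pi"] k(3) by force
  have "pi \<le> tau_minus p \<eta> s" unfolding tau_minus_def
  proof (rule cInf_greatest)
    show "{\<tau>. 0 < \<tau> \<and> ell_minus p \<eta> \<tau> s = 0} \<noteq> {}" using t0 by auto
    fix x assume "x \<in> {\<tau>. 0 < \<tau> \<and> ell_minus p \<eta> \<tau> s = 0}"
    then show "pi \<le> x" using nr[of x] by force
  qed
  obtain j where j: "(P - 1) / (P * c) \<le> real j" "real j < (P - 1) / (P * c) + 1" "j \<ge> 1"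
    using nat_ceil_ex[of "(P - 1) / (P * c)"] c P by auto
  have j1: "pi * (P - 1) / P \<le> real j * pi * c" using scale_le[OF _ c j(1)] P by simp
  have j2: "real j * pi * c < pi * (P - 1) / P + pi * c" using scale_less[OF _ c j(2)] P by simp
  have e1: "pi * (P - 1) / P = pi - pi / P" using P by (simp add: field_simps)
  have "sin (real j * pi * (1 + \<eta> * s) + pi / real p) \<le> 0"
    unfolding c_def[symmetric] P_def[symmetric]
  proof (rule sin_le_zero)
    have "pi - pi / P \<le> real j * pi * c" using j1 unfolding e1 .
    then show "pi \<le> real j * pi * c + pi / P" by linarith
    have "real j * pi * c < pi - pi / P + pi * c" using j2 unfolding e1 .
    then show "real j * pi * c + pi / P < 2 * pi" using pc by linarith
  qed
  hence "ell_plus p \<eta> (real j * pi) s \<le> 0" by (simp add: ell_plus_npi)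
  then obtain t1 where t1: "0 < t1" "ell_plus p \<eta> t1 s = 0"
    using root_plus[OF p, of "real j * pi"] j(3) by force
  have "pi \<le> tau_plus p \<eta> s" unfolding tau_plus_def
  proof (rule cInf_greatest)
    show "{\<tau>. 0 < \<tau> \<and> ell_plus p \<eta> \<tau> s = 0} \<noteq> {}" using t1 by auto
    fix x assume "x \<in> {\<tau>. 0 < \<tau> \<and> ell_plus p \<eta> \<tau> s = 0}"
    then show "pi \<le> x" using nr[of x] by force
  qed
  with \<open>pi \<le> tau_minus p \<eta> s\<close> show ?thesis by simp
qed




lemma small_case:
  fixes p :: nat and \<eta> s :: real
  assumes p: "p \<ge> 2" and u1: "- ((real p - 1) / real p) \<le> \<eta> * s" and u2: "\<eta> * s \<le> (real p - 1) / real p"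
  shows "tau_ell p \<eta> s \<le> pi \<and> (\<bar>\<eta> * s\<bar> < (real p - 1) / real p \<longrightarrow> tau_ell p \<eta> s < pi)"
proof -
  define P where "P = real p"
  define q where "q = (P - 1) / P"
  define u where "u = \<eta> * s"
  have P: "P \<ge> 2" using p unfolding P_def by simp
  have A: "q * pi = pi - pi / P" unfolding q_def using P by (simp add: field_simps)
  have q1: "1 / P \<le> q" unfolding q_def using P by (simp add: field_simps)
  have B: "1 / P * pi = pi / P" by simp
  have pu: "pi * \<eta> * s = u * pi" unfolding u_def by simp
  have u1': "- q \<le> u" and u2': "u \<le> q" using u1 u2 unfolding q_def u_def P_def by auto
  have strict: "\<bar>\<eta> * s\<bar> < (real p - 1) / real p \<Longrightarrow> - q < u \<and> u < q"
    unfolding q_def u_def P_def by linarith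
  have tm: "tau_ell p \<eta> s \<le> tau_minus p \<eta> s" "tau_ell p \<eta> s \<le> tau_plus p \<eta> s"
    unfolding tau_ell_def by simp_all
  consider "u < 1 / P" | "u \<ge> 1 / P" by linarith
  then show ?thesis
  proof cases
    case 1
    have l1: "- q * pi \<le> u * pi" using u1' by (intro mult_right_mono) auto
    have l2: "u * pi < 1 / P * pi" using 1 by (intro mult_strict_right_mono) auto
    have y1: "- pi \<le> u * pi - pi / P" using l1 A by linarith
    have y2: "u * pi - pi / P < 0" using l2 B by linarith
    have s0: "sin (- (u * pi - pi / P)) \<ge> 0" using y1 y2 by (intro sin_ge_zero) auto
    have em: "ell_minus p \<eta> pi s = sin (- (u * pi - pi / P))"
      unfolding ell_minus_pi pu P_def by (simp only: sin_minus)
    obtain t where t: "0 < t" "t \<le> pi" "ell_minus p \<eta> t s = 0" "ell_minus p \<eta> pi s \<noteq> 0 \<longrightarrow> t < pi"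
      using root_minus[OF p, of pi \<eta> s] s0 em by auto
    have "tau_minus p \<eta> s \<le> t" using tau_minus_le t by blast
    moreover have "\<bar>\<eta> * s\<bar> < (real p - 1) / real p \<longrightarrow> t < pi"
    proof
      assume "\<bar>\<eta> * s\<bar> < (real p - 1) / real p"
      hence "- q < u" using strict by blast
      hence "- q * pi < u * pi" by (intro mult_strict_right_mono) auto
      hence "- pi < u * pi - pi / P" using A by linarith
      hence "sin (- (u * pi - pi / P)) > 0" using y2 by (intro sin_gt_zero) auto
      then show "t < pi" using t(4) em by auto
    qed
    ultimately show ?thesis using t tm by linarith
  next
    case 2
    have l1: "u * pi \<le> q * pi" using u2' by (intro mult_right_mono) auto
    have l2: "1 / P * pi \<le> u * pi" using 2 by (intro mult_right_mono) auto
    have y1: "u * pi + pi / P \<le> pi" using l1 A by linarith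
    have pP: "pi / P > 0" using P by simp
    have y2: "0 < u * pi + pi / P" using l2 B pP by linarith
    have s0: "sin (u * pi + pi / P) \<ge> 0" using y1 y2 by (intro sin_ge_zero) auto
    have ep: "ell_plus p \<eta> pi s = - sin (u * pi + pi / P)"
      unfolding ell_plus_pi pu P_def by simp
    obtain t where t: "0 < t" "t \<le> pi" "ell_plus p \<eta> t s = 0" "ell_plus p \<eta> pi s \<noteq> 0 \<longrightarrow> t < pi"
      using root_plus[OF p, of pi \<eta> s] s0 ep by auto
    have "tau_plus p \<eta> s \<le> t" using tau_plus_le t by blast
    moreover have "\<bar>\<eta> * s\<bar> < (real p - 1) / real p \<longrightarrow> t < pi"
    proof
      assume "\<bar>\<eta> * s\<bar> < (real p - 1) / real p"
      hence "u < q" using strict by blast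
      hence "u * pi < q * pi" by (intro mult_strict_right_mono) auto
      hence "u * pi + pi / P < pi" using A by linarith
      hence "sin (u * pi + pi / P) > 0" using y2 by (intro sin_gt_zero) auto
      then show "t < pi" using t(4) ep by auto
    qed
    ultimately show ?thesis using t tm by linarith
  qed
qed

lemma large_case:
  fixes p :: nat and \<eta> s :: real
  assumes p: "p \<ge> 2" and s: "s > 0" and u: "\<eta> * s > 1 / real p"
  shows "tau_ell p \<eta> s \<le> pi"
proof -
  define P where "P = real p"
  have P: "P \<ge> 2" using p unfolding P_def by simp
  have oP: "1 / P > 0" using P by simp
  have es: "\<eta> * s > 0" using u oP unfolding P_def[symmetric] by linarith
  define t where "t = (pi / P) / (\<eta> * s)"
  have t0: "t > 0" unfolding t_def using es P by simp
  have "1 / P * pi < \<eta> * s * pi" using u unfolding P_def[symmetric] by (intro mult_strict_right_mono) auto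
  hence "pi / P < pi * (\<eta> * s)" by (simp add: mult.commute)
  hence tpi: "t < pi" unfolding t_def using pos_divide_less_eq[OF es] by blast
  have ne: "\<eta> \<noteq> 0" "s \<noteq> 0" "P \<noteq> 0" using es P by auto
  have "t * (\<eta> * s) = pi / P" unfolding t_def using ne by simp
  hence "t * \<eta> * s = pi / P" by (simp add: mult.assoc)
  hence "ell_minus p \<eta> t s = s * sin t" unfolding ell_minus_def P_def by simp
  moreover have "sin t > 0" using t0 tpi by (intro sin_gt_zero)
  ultimately have "ell_minus p \<eta> t s \<ge> 0" using s by simp
  then obtain t1 where "0 < t1" "t1 \<le> t" "ell_minus p \<eta> t1 s = 0"
    using root_minus[OF p t0] by blast
  hence "tau_minus p \<eta> s \<le> t1" using tau_minus_le by blast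
  then show ?thesis unfolding tau_ell_def using \<open>t1 \<le> t\<close> tpi by linarith
qed




lemma div_abs_le: fixes q e a :: real assumes "e > 0" "q / (P * e) \<le> a" "P > 0"
  shows "q / P \<le> e * a"
proof -
  have "q / P / e \<le> a" using assms by (simp add: divide_divide_eq_left mult.commute)
  thus ?thesis using assms by (simp add: pos_divide_le_eq mult_ac)
qed

lemma div_abs_less: fixes q e a :: real assumes "e > 0" "a < q / (P * e)" "P > 0"
  shows "e * a < q / P"
proof -
  have "a < q / P / e" using assms by (simp add: divide_divide_eq_left mult.commute)
  thus ?thesis using assms by (simp add: pos_less_divide_eq mult_ac)
qed

theorem mainTheorem3:
  fixes p :: nat and \<eta> :: real
  assumes "p \<ge> 2" and "\<eta> > -1"
  shows "(\<eta> \<ge> - (real p - 1) / real p \<longrightarrow>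
            (\<forall>s \<in> {-1..1}. tau_ell p \<eta> s \<le> pi))
       \<and> (\<eta> < - (real p - 1) / real p \<longrightarrow>
            (\<forall>s. (real p - 1) / (real p * \<bar>\<eta>\<bar>) \<le> \<bar>s\<bar> \<and> \<bar>s\<bar> \<le> 1 \<longrightarrow> tau_ell p \<eta> s \<ge> pi)
          \<and> (\<forall>s. \<bar>s\<bar> < (real p - 1) / (real p * \<bar>\<eta>\<bar>) \<longrightarrow> tau_ell p \<eta> s < pi))"
proof -
  note p = assms(1)
  define P where "P = real p"
  have P: "P \<ge> 2" using p unfolding P_def by simp
  have q0: "(P - 1) / P > 0" using P by simp
  have q1: "1 / P \<le> (P - 1) / P" using P by (simp add: field_simps)
  have absmul: "\<bar>\<eta> * s\<bar> = \<bar>\<eta>\<bar> * \<bar>s\<bar>" for s by (simp add: abs_mult)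
  have part1: "tau_ell p \<eta> s \<le> pi" if e: "\<eta> \<ge> - (P - 1) / P" and s: "-1 \<le> s" "s \<le> 1" for s
  proof (cases "\<bar>\<eta> * s\<bar> \<le> (P - 1) / P")
    case True
    then show ?thesis using small_case[OF p, of \<eta> s] unfolding P_def by (simp add: abs_le_iff)
  next
    case False
    have "\<eta> > 0"
    proof (rule ccontr)
      assume "\<not> \<eta> > 0"
      moreover have "- ((P - 1) / P) \<le> \<eta>" using e by (simp only: minus_divide_left)
      ultimately have "\<bar>\<eta>\<bar> \<le> (P - 1) / P" by linarith
      moreover have "\<bar>\<eta>\<bar> * \<bar>s\<bar> \<le> \<bar>\<eta>\<bar> * 1" using s by (intro mult_left_mono) auto
      ultimately show False using False absmul[of s] by linarith
    qed
    consider "s > 0" | "s < 0" | "s = 0" by linarith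
    then show ?thesis
    proof cases
      case 1
      then have "\<eta> * s > 1 / P" using False q1 \<open>\<eta> > 0\<close> by (simp add: abs_mult)
      then show ?thesis using large_case[OF p 1] unfolding P_def by simp
    next
      case 2
      then have "\<eta> * (- s) > 1 / P" using False q1 \<open>\<eta> > 0\<close> by (simp add: abs_mult)
      then have "tau_ell p \<eta> (- s) \<le> pi" using large_case[OF p, of "-s"] 2 unfolding P_def by simp
      then show ?thesis using tau_ell_sym by simp
    next
      case 3 then show ?thesis using False q0 by simp
    qed
  qed
  have part2a: "tau_ell p \<eta> s \<ge> pi"
    if e: "\<eta> < - (P - 1) / P" and s: "(P - 1) / (P * \<bar>\<eta>\<bar>) \<le> \<bar>s\<bar>" "\<bar>s\<bar> \<le> 1" for s
  proof -
    have en: "\<eta> < 0" using e q0 by linarith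
    have ea: "\<bar>\<eta>\<bar> > 0" using en by simp
    have b: "(P - 1) / P \<le> \<bar>\<eta>\<bar> * \<bar>s\<bar>" using div_abs_le[OF ea s(1)] P by simp
    have "s \<noteq> 0" using b q0 by auto
    then consider "s > 0" | "s < 0" by linarith
    then show ?thesis
    proof cases
      case 1
      have "(real p - 1) / real p \<le> - \<eta> * s" using b 1 en unfolding P_def by simp
      then show ?thesis using part2a_pos[OF p 1 _ assms(2)] s(2) 1 unfolding tau_ell_def by simp
    next
      case 2
      have "(real p - 1) / real p \<le> - \<eta> * (- s)" using b 2 en unfolding P_def by simp
      then have "tau_ell p \<eta> (- s) \<ge> pi"
        using part2a_pos[OF p _ _ assms(2), of "-s"] s(2) 2 unfolding tau_ell_def by simp
      then show ?thesis using tau_ell_sym by simp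
    qed
  qed
  have part2b: "tau_ell p \<eta> s < pi"
    if e: "\<eta> < - (P - 1) / P" and s: "\<bar>s\<bar> < (P - 1) / (P * \<bar>\<eta>\<bar>)" for s
  proof -
    have en: "\<eta> < 0" using e q0 by linarith
    have ea: "\<bar>\<eta>\<bar> > 0" using en by simp
    have b: "\<bar>\<eta> * s\<bar> < (P - 1) / P" using div_abs_less[OF ea s] P absmul[of s] by simp
    then show ?thesis using small_case[OF p, of \<eta> s] unfolding P_def by (simp add: abs_less_iff)
  qed
  show ?thesis
    using part1 part2a part2b unfolding P_def by auto
qed


end
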